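(* Let $m'\ge 2$ be an integer and $p\in(0,1/2)$ a constant. There exists an integer $M_{p,m'}$, depending only on $p$ and $m'$, such that for every integer $n'>M_{p,m'}$, $$\sum_{\substack{\ell\ge\mu\ge m'\\ \ell+\mu\le n'}}\binom{n'}{\ell+\mu}\binom{\ell+\mu}{\ell}\left(\frac{p}{1-p}\right)^{\ell\mu}\le 2\binom{n'}{m'}\left(1+\left(\frac{p}{1-p}\right)^{m'}\right)^{n'},$$ where the sum is over integers $\ell,\mu$. Moreover, if $p<0.01$, this inequality holds for all integers $m'\ge 2$ and $n'\ge 2m'$. *)

theory Defs
  imports Complex_Main
begin

text \<open>Left-hand side of the inequality: sum over integers l, mu with
  l \<ge> mu \<ge> m' and l + mu \<le> n' (all nonnegative since m' \<ge> 2).\<close>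
definition lhs_sum :: "real \<Rightarrow> nat \<Rightarrow> nat \<Rightarrow> real" where
  "lhs_sum p m' n' =
     (\<Sum>(l, \<mu>) \<in> {(l, \<mu>). \<mu> \<le> l \<and> m' \<le> \<mu> \<and> l + \<mu> \<le> n'}.
        real (n' choose (l + \<mu>)) * real ((l + \<mu>) choose l) * (p / (1 - p)) ^ (l * \<mu>))"

definition rhs_bound :: "real \<Rightarrow> nat \<Rightarrow> nat \<Rightarrow> real" where
  "rhs_bound p m' n' = 2 * real (n' choose m') * (1 + (p / (1 - p)) ^ m') ^ n'"

end

theory Submission
  imports Defs "HOL-Real_Asymp.Real_Asymp"
begin

lemma binom_step: "(k choose Suc j) * Suc j = (k choose j) * (k - j)"
proof (cases k)
  case 0 then show ?thesis by simp
next
  case (Suc n)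
  have "Suc j * (Suc n choose Suc j) = Suc n * (n choose j)" by (rule Suc_times_binomial)
  moreover have "(Suc n - j) * (Suc n choose j) = Suc n * ((Suc n - 1) choose j)"
    by (rule binomial_absorb_comp)
  ultimately show ?thesis using Suc by (simp add: mult.commute)
qed

lemma binom_ratio: "m + d \<le> k \<Longrightarrow> (k choose (m+d)) * (m+1)^d \<le> (k choose m) * (k-m)^d"
proof (induction d)
  case 0 show ?case by simp
next
  case (Suc d)
  have IH: "(k choose (m+d)) * (m+1)^d \<le> (k choose m)*(k-m)^d" using Suc by simp
  have p1: "(m+1)^Suc d \<le> Suc (m+d) * (m+1)^d" by simp
  have "(k choose (m + Suc d)) * (m+1)^(Suc d) \<le> (k choose Suc (m+d)) * (Suc (m+d) * (m+1)^d)"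
    using p1 by simp
  also have "\<dots> = ((k choose Suc (m+d)) * Suc (m+d)) * (m+1)^d"
    by (simp only: mult.assoc)
  also have "\<dots> = (k choose (m+d)) * (k - (m+d)) * (m+1)^d"
    by (simp only: binom_step)
  also have "\<dots> = ((k choose (m+d)) * (m+1)^d) * (k - (m+d))" by simp
  also have "\<dots> \<le> ((k choose m)*(k-m)^d) * (k-m)"
    by (rule mult_le_mono[OF IH]) simp
  also have "\<dots> = (k choose m)*(k-m)^Suc d" by simp
  finally show ?case .
qed

lemma binom_bound:
  assumes "m \<le> \<mu>" "2*\<mu> \<le> k"
  shows "real (k choose \<mu>) \<le> real (k choose m) * (1 + real (k - 2*m))^(\<mu> - m)"
proof -
  define d where "d = \<mu> - m"
  define K where "K = k - 2*m"
  have mu: "\<mu> = m + d" using assms d_def by simp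
  have "(k choose \<mu>) * (m+1)^d \<le> (k choose m) * (k-m)^d"
    using binom_ratio[of m d k] mu assms by simp
  also have "\<dots> \<le> (k choose m) * ((1+K)*(m+1))^d"
  proof -
    obtain K' where K': "k = 2*m + K'" using assms le_Suc_ex[of "2*m" k] by auto
    have "k - m \<le> (1+K)*(m+1)" unfolding K_def K' by (simp add: algebra_simps)
    then show ?thesis by (intro mult_le_mono2 power_mono) auto
  qed
  also have "\<dots> = ((k choose m) * (1+K)^d) * (m+1)^d" by (simp only: power_mult_distrib mult.assoc)
  finally have "(k choose \<mu>) \<le> (k choose m) * (1+K)^d" by simp
  then have "real (k choose \<mu>) \<le> real ((k choose m) * (1+K)^d)" by linarith
  then show ?thesis unfolding K_def d_def by simp
qed

lemma term_bound:
  assumes q: "0 \<le> q" "q \<le> 1" and "m \<le> \<mu>" "2*\<mu> \<le> k"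
  shows "real (k choose (k-\<mu>)) * q^((k-\<mu>)*\<mu>)
     \<le> real (k choose m) * q^(m*(k-m)) * ((1 + real (k-2*m)) * sqrt q ^ (k-2*m))^(\<mu>-m)"
proof -
  obtain d where d: "\<mu> = m + d" using assms le_Suc_ex[of m \<mu>] by auto
  have "2*m + 2*d \<le> k" using assms d by simp
  then obtain e where e: "k = 2*m + 2*d + e" using le_Suc_ex by blast
  have C: "k choose (k-\<mu>) = k choose \<mu>"
    using binomial_symmetric[of \<mu> k] assms by simp
  have e1: "q^((k-\<mu>)*\<mu>) = q^(m*(k-m)) * q^(d*(d+e))"
  proof -
    have "(k-\<mu>)*\<mu> = m*(k-m) + d*(d+e)" using d e by (simp add: algebra_simps)
    then show ?thesis by (simp add: power_add)
  qed
  have s1: "sqrt q \<le> 1" "0 \<le> sqrt q" using q by auto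
  have e2: "q^(d*(d+e)) \<le> sqrt q^(d*(2*d+e))"
  proof -
    have "q^(d*(d+e)) = sqrt q^(2*(d*(d+e)))" using q by (simp add: power_mult)
    also have "\<dots> \<le> sqrt q^(d*(2*d+e))"
      by (rule power_decreasing) (use s1 in \<open>auto simp: algebra_simps\<close>)
    finally show ?thesis .
  qed
  have e3: "sqrt q^(d*(2*d+e)) = (sqrt q^(k-2*m))^(\<mu>-m)"
    using d e by (simp add: power_mult[symmetric] mult.commute)
  have B: "real (k choose \<mu>) \<le> real (k choose m) * (1 + real (k - 2*m))^(\<mu> - m)"
    by (rule binom_bound) (use assms in auto)
  have "real (k choose (k-\<mu>)) * q^((k-\<mu>)*\<mu>) = real (k choose \<mu>) * q^(d*(d+e)) * q^(m*(k-m))"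
    using C e1 by simp
  also have "\<dots> \<le> (real (k choose m) * (1 + real (k - 2*m))^(\<mu> - m)) * (sqrt q^(k-2*m))^(\<mu>-m) * q^(m*(k-m))"
    using B e2 e3 q by (intro mult_right_mono mult_mono) auto
  also have "\<dots> = real (k choose m) * q^(m*(k-m)) * ((1 + real (k-2*m)) * sqrt q ^ (k-2*m))^(\<mu>-m)"
    by (simp add: power_mult_distrib)
  finally show ?thesis .
qed

lemma sum_half: "(\<Sum>\<mu>\<in>{m..N}. (1/2::real)^(\<mu>-m)) \<le> 2"
proof (cases "m \<le> N")
  case True
  have "(\<Sum>\<mu>\<in>{m..N}. (1/2::real)^(\<mu>-m)) = (\<Sum>i\<in>{0..N-m}. (1/2::real)^i)"
    using True by (subst sum.atLeastAtMost_shift_0) (auto simp: comp_def)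
  also have "\<dots> < 1 / (1 - 1/2)" by (rule geometric_sum_less) auto
  finally show ?thesis by simp
qed simp

definition gsum :: "real \<Rightarrow> nat \<Rightarrow> nat \<Rightarrow> real" where
  "gsum q m k = (\<Sum>\<mu>\<in>{\<mu>. m\<le>\<mu> \<and> 2*\<mu>\<le>k}. real (k choose (k-\<mu>)) * q^((k-\<mu>)*\<mu>))"

definition hh :: "real \<Rightarrow> nat \<Rightarrow> nat \<Rightarrow> real" where
  "hh q m k = real (k choose m) * q^(m*(k-m))"

lemma set_eq: "{\<mu>::nat. m\<le>\<mu> \<and> 2*\<mu>\<le>k} = {m..k div 2}" by auto

lemma g_bound:
  assumes q: "0 \<le> q" "q \<le> 1"
    and hyp: "(1 + real (k-2*m)) * sqrt q^(k-2*m) \<le> 1/2 \<or> k \<le> 2*m+1"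
  shows "gsum q m k \<le> 2 * hh q m k"
proof -
  have hh0: "0 \<le> hh q m k" unfolding hh_def using q by simp
  have pt: "real (k choose (k-\<mu>)) * q^((k-\<mu>)*\<mu>) \<le> hh q m k * (1/2)^(\<mu>-m)"
    if "\<mu> \<in> {m..k div 2}" for \<mu>
  proof -
    have a: "m \<le> \<mu>" "2*\<mu> \<le> k" using that by auto
    define A where "A = (1 + real (k-2*m)) * sqrt q^(k-2*m)"
    have A0: "0 \<le> A" unfolding A_def using q by simp
    have "A^(\<mu>-m) \<le> (1/2)^(\<mu>-m)"
    proof (cases "A \<le> 1/2")
      case True then show ?thesis using A0 by (intro power_mono) auto
    next
      case False
      then have "k \<le> 2*m+1" using hyp A_def by auto
      then have "\<mu> = m" using a by auto
      then show ?thesis by simp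
    qed
    then have "hh q m k * A^(\<mu>-m) \<le> hh q m k * (1/2)^(\<mu>-m)"
      using hh0 by (intro mult_left_mono)
    moreover have "real (k choose (k-\<mu>)) * q^((k-\<mu>)*\<mu>) \<le> hh q m k * A^(\<mu>-m)"
      using term_bound[OF q a] unfolding hh_def A_def by simp
    ultimately show ?thesis by linarith
  qed
  have "gsum q m k \<le> (\<Sum>\<mu>\<in>{m..k div 2}. hh q m k * (1/2)^(\<mu>-m))"
    unfolding gsum_def set_eq by (rule sum_mono) (rule pt)
  also have "\<dots> = hh q m k * (\<Sum>\<mu>\<in>{m..k div 2}. (1/2)^(\<mu>-m))"
    by (simp add: sum_distrib_left)
  also have "\<dots> \<le> hh q m k * 2" using hh0 sum_half by (intro mult_left_mono) auto
  finally show ?thesis by simp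
qed

lemma g_crude:
  assumes q: "0 \<le> q" "q \<le> 1"
  shows "gsum q m k \<le> real (k+1) * 2^k"
proof -
  have "gsum q m k \<le> real (card {m..k div 2}) * 2^k"
    unfolding gsum_def set_eq
  proof (rule sum_bounded_above)
    fix \<mu> assume "\<mu> \<in> {m..k div 2}"
    have "real (k choose (k-\<mu>)) \<le> 2^k"
      using binomial_le_pow2[of k "k-\<mu>"] by (metis of_nat_le_iff of_nat_numeral of_nat_power)
    moreover have "q^((k-\<mu>)*\<mu>) \<le> 1" using q by (simp add: power_le_one)
    moreover have "real (k choose (k-\<mu>)) * q^((k-\<mu>)*\<mu>) \<le> real (k choose (k-\<mu>))"
      by (rule mult_left_le) (use q in \<open>auto simp: power_le_one\<close>)
    ultimately show "real (k choose (k-\<mu>)) * q^((k-\<mu>)*\<mu>) \<le> 2^k" by linarith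
  qed
  also have "\<dots> \<le> real (k+1) * 2^k" by (intro mult_right_mono) auto
  finally show ?thesis .
qed

lemma lhs_reindex:
  "lhs_sum p m n = (\<Sum>k\<le>n. real (n choose k) * gsum (p/(1-p)) m k)"
proof -
  let ?q = "p/(1-p)"
  let ?T = "SIGMA k:{..n}. {\<mu>. m\<le>\<mu> \<and> 2*\<mu>\<le>k}"
  have "lhs_sum p m n = (\<Sum>(k,\<mu>)\<in>?T. real (n choose k) * (real (k choose (k-\<mu>)) * ?q^((k-\<mu>)*\<mu>)))"
    unfolding lhs_sum_def
    by (rule sum.reindex_bij_witness[of _ "\<lambda>(k,\<mu>). (k-\<mu>,\<mu>)" "\<lambda>(l,\<mu>). (l+\<mu>,\<mu>)"]) auto
  also have "\<dots> = (\<Sum>k\<le>n. \<Sum>\<mu>\<in>{\<mu>. m\<le>\<mu> \<and> 2*\<mu>\<le>k}. real (n choose k) * (real (k choose (k-\<mu>)) * ?q^((k-\<mu>)*\<mu>)))"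
    by (rule sum.Sigma[symmetric]) (auto simp: set_eq)
  also have "\<dots> = (\<Sum>k\<le>n. real (n choose k) * gsum ?q m k)"
    unfolding gsum_def by (simp add: sum_distrib_left)
  finally show ?thesis .
qed

lemma R0:
  assumes "m \<le> n"
  shows "(\<Sum>k\<in>{m..n}. real (n choose k) * hh q m k) = real (n choose m) * (1+q^m)^(n-m)"
proof -
  have bin: "(1+q^m)^(n-m) = (\<Sum>j\<le>n-m. real ((n-m) choose j) * (q^m)^j)"
    using binomial_ring[of "q^m" 1 "n-m"] by (simp add: add.commute)
  have "(\<Sum>k\<in>{m..n}. real (n choose k) * hh q m k) = (\<Sum>j\<in>{0..n-m}. real (n choose (m+j)) * hh q m (m+j))"
    using assms by (subst sum.atLeastAtMost_shift_0) (auto simp: comp_def)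
  also have "\<dots> = (\<Sum>j\<le>n-m. real (n choose m) * (real ((n-m) choose j) * (q^m)^j))"
  proof (rule sum.cong)
    show "{0..n-m} = {..n-m}" by auto
  next
    fix j assume "j \<in> {..n-m}"
    then have j: "m + j \<le> n" using assms by auto
    have "(n choose (m+j)) * ((m+j) choose m) = (n choose m) * ((n-m) choose j)"
      using choose_mult[of m "m+j" n] j by simp
    then have "real (n choose (m+j)) * real ((m+j) choose m) = real (n choose m) * real ((n-m) choose j)"
      by (metis of_nat_mult)
    then show "real (n choose (m+j)) * hh q m (m+j) = real (n choose m) * (real ((n-m) choose j) * (q^m)^j)"
      unfolding hh_def by (simp add: power_mult mult.assoc[symmetric])
  qed
  also have "\<dots> = real (n choose m) * (1+q^m)^(n-m)"
    unfolding bin by (simp add: sum_distrib_left)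
  finally show ?thesis .
qed

lemma main_bound:
  assumes "0 \<le> q" "m \<le> n" "\<And>k. gsum q m k \<le> 2*hh q m k + F k"
  shows "(\<Sum>k\<in>{m..n}. real (n choose k) * gsum q m k)
     \<le> 2*real (n choose m)*(1+q^m)^(n-m) + (\<Sum>k\<in>{m..n}. real (n choose k) * F k)"
proof -
  have "(\<Sum>k\<in>{m..n}. real (n choose k) * gsum q m k)
      \<le> (\<Sum>k\<in>{m..n}. 2*(real (n choose k)*hh q m k) + real (n choose k) * F k)"
  proof (rule sum_mono)
    fix k
    have "real (n choose k) * gsum q m k \<le> real (n choose k) * (2*hh q m k + F k)"
      using assms(3) by (intro mult_left_mono) auto
    then show "real (n choose k) * gsum q m k \<le> 2*(real (n choose k)*hh q m k) + real (n choose k) * F k"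
      by (simp add: algebra_simps)
  qed
  also have "\<dots> = 2*(\<Sum>k\<in>{m..n}. real (n choose k)*hh q m k) + (\<Sum>k\<in>{m..n}. real (n choose k) * F k)"
    by (simp add: sum.distrib sum_distrib_left)
  also have "\<dots> = 2*real (n choose m)*(1+q^m)^(n-m) + (\<Sum>k\<in>{m..n}. real (n choose k) * F k)"
    using R0[OF assms(2)] by simp
  finally show ?thesis .
qed

lemma pow2_ge: "1 + real K \<le> 2^K"
  by (induction K) auto

lemma small_q_hyp:
  assumes "0 \<le> q" "q \<le> 1/25"
  shows "(1 + real (k-2*m)) * sqrt q^(k-2*m) \<le> 1/2 \<or> k \<le> 2*m+1"
proof (cases "k \<le> 2*m+1")
  case False
  define K where "K = k - 2*m"
  have K1: "1 \<le> K" using False K_def by simp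
  have s: "sqrt q \<le> 1/5"
    by (rule power2_le_imp_le) (use assms in \<open>auto simp: power2_eq_square\<close>)
  have "(1 + real K) * sqrt q^K \<le> 2^K * (1/5)^K"
    using pow2_ge[of K] s assms by (intro mult_mono power_mono) auto
  also have "\<dots> = (2/5)^K" by (simp add: power_mult_distrib[symmetric])
  also have "\<dots> \<le> (2/5)^1" by (rule power_decreasing) (use K1 in auto)
  finally show ?thesis unfolding K_def by simp
qed simp

lemma ev1: "0 < (c::real) \<Longrightarrow> c < 1 \<Longrightarrow> eventually (\<lambda>K. (1 + real K) * c ^ K \<le> 1/2) at_top"
  by real_asymp

lemma ev2: "(a::real) > 1 \<Longrightarrow> eventually (\<lambda>n. C * ((real n + 1) * real n ^ L) \<le> a ^ n) at_top"
  by real_asymp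

lemma binom_le_powL: "k < L \<Longrightarrow> 1 \<le> n \<Longrightarrow> real (n choose k) \<le> real n ^ L"
proof (cases "k \<le> n")
  case True
  assume kL: "k < L" and n1: "1 \<le> n"
  have "n choose k \<le> n^k" by (rule binomial_le_pow[OF True])
  also have "\<dots> \<le> n^L" using n1 kL by (intro power_increasing) auto
  finally show ?thesis by (metis of_nat_le_iff of_nat_power)
qed (simp add: binomial_eq_0)

theorem mainTheorem5:
  fixes p :: real and m' :: nat
  assumes "m' \<ge> 2" and "0 < p" and "p < 1/2"
  shows "(\<exists>M::nat. \<forall>n'::nat. n' > M \<longrightarrow> lhs_sum p m' n' \<le> rhs_bound p m' n')
         \<and> (p < 0.01 \<longrightarrow> (\<forall>n'::nat. n' \<ge> 2 * m' \<longrightarrow> lhs_sum p m' n' \<le> rhs_bound p m' n'))"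
proof -
  define q where "q = p/(1-p)"
  have q0: "0 < q" "q < 1" using assms unfolding q_def by (auto simp: field_simps)
  have lhs: "lhs_sum p m' n = (\<Sum>k\<in>{m'..n}. real (n choose k) * gsum q m' k)" for n
  proof -
    have "lhs_sum p m' n = (\<Sum>k\<le>n. real (n choose k) * gsum q m' k)"
      using lhs_reindex unfolding q_def by simp
    also have "\<dots> = (\<Sum>k\<in>{m'..n}. real (n choose k) * gsum q m' k)"
    proof (rule sum.mono_neutral_right)
      show "\<forall>i\<in>{..n} - {m'..n}. real (n choose i) * gsum q m' i = 0"
      proof
        fix i assume "i \<in> {..n} - {m'..n}"
        then have "i < m'" by auto
        then have E0: "{\<mu>. m'\<le>\<mu> \<and> 2*\<mu>\<le>i} = {}" by auto
        show "real (n choose i) * gsum q m' i = 0" unfolding gsum_def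
          by (simp only: E0 sum.empty mult_zero_right)
      qed
    qed auto
    finally show ?thesis .
  qed
  have rhs: "rhs_bound p m' n = 2*real (n choose m')*(1+q^m')^n" for n
    by (simp add: rhs_bound_def q_def)
  have a1: "1 \<le> (1+q^m')" using q0 by simp
  show ?thesis
  proof
    show "\<exists>M::nat. \<forall>n'::nat. n' > M \<longrightarrow> lhs_sum p m' n' \<le> rhs_bound p m' n'"
    proof -
      have sq: "0 < sqrt q" "sqrt q < 1" using q0 by auto
      obtain K0 where K0: "\<And>K. K \<ge> K0 \<Longrightarrow> (1 + real K) * sqrt q^K \<le> 1/2"
        using ev1[OF sq] unfolding eventually_at_top_linorder by blast
      define L where "L = 2*m' + K0"
      define B where "B = real (L+1) * 2^L"
      have B0: "0 \<le> B" unfolding B_def by simp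
      have gk: "gsum q m' k \<le> 2*hh q m' k + (if k < L then B else 0)" for k
      proof (cases "k < L")
        case True
        have "gsum q m' k \<le> real (k+1) * 2^k" using g_crude q0 by simp
        also have "\<dots> \<le> B" unfolding B_def using True
          by (intro mult_mono power_increasing) auto
        moreover have "0 \<le> hh q m' k" unfolding hh_def using q0 by simp
        ultimately show ?thesis using True by simp
      next
        case False
        then have "k - 2*m' \<ge> K0" unfolding L_def by simp
        then have "gsum q m' k \<le> 2 * hh q m' k"
          using q0 K0 by (intro g_bound) auto
        then show ?thesis using False by simp
      qed
      define a where "a = 1 + q^m'"
      have a1': "1 < a" unfolding a_def using q0 by simp
      have qm: "0 < q^m'" using q0 by simp
      obtain N0 where N0: "\<And>n. n \<ge> N0 \<Longrightarrow> (a^m'/(2*q^m') * B) * ((real n + 1) * real n ^ L) \<le> a^n"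
        using ev2[OF a1', of "a^m'/(2*q^m') * B" L] unfolding eventually_at_top_linorder by blast
      show ?thesis
      proof (intro exI allI impI)
        fix n assume nM: "n > N0 + 2*m'"
        then have mn: "m' \<le> n" and n1: "1 \<le> n" and nN: "n \<ge> N0" using assms by auto
        have st: "lhs_sum p m' n \<le> 2*real (n choose m')*a^(n-m')
            + (\<Sum>k\<in>{m'..n}. real (n choose k) * (if k < L then B else 0))"
          unfolding lhs a_def by (rule main_bound) (use q0 mn gk in auto)
        have "(\<Sum>k\<in>{m'..n}. real (n choose k) * (if k < L then B else 0))
            \<le> real (card {m'..n}) * (real n ^ L * B)"
        proof (rule sum_bounded_above)
          fix k
          show "real (n choose k) * (if k < L then B else 0) \<le> real n ^ L * B"
          proof (cases "k < L")
            case True then show ?thesis using binom_le_powL[OF True n1] B0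
              by (simp add: mult_right_mono)
          qed (simp add: B0)
        qed
        also have "\<dots> \<le> (real n + 1) * (real n ^ L * B)"
          using B0 by (intro mult_right_mono) auto
        finally have E: "(\<Sum>k\<in>{m'..n}. real (n choose k) * (if k < L then B else 0))
            \<le> (real n + 1) * real n ^ L * B" by (simp add: mult.assoc)
        define X where "X = (real n + 1) * real n ^ L * B"
        have an: "a^n = a^(n-m') * a^m'" using mn by (simp add: power_add[symmetric])
        have am: "0 < a^m'" using a1' by simp
        have "(a^m'/(2*q^m') * B) * ((real n + 1) * real n ^ L) \<le> a^n" using N0[OF nN] .
        then have "X * a^m' / (2*q^m') \<le> a^(n-m') * a^m'" unfolding X_def an
          by (simp add: algebra_simps)
        then have "X * a^m' \<le> (2*q^m' * a^(n-m')) * a^m'"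
          using qm by (simp add: divide_le_eq algebra_simps)
        then have X: "X \<le> 2*q^m' * a^(n-m')" using am by simp
        have "0 < n choose m'" using mn by simp
        then have "1 \<le> n choose m'" by linarith
        then have C1: "1 \<le> real (n choose m')" by simp
        have am2: "1 + q^m' \<le> a^m'"
          using power_increasing[of 1 m' a] a1' assms unfolding a_def by simp
        have an0: "0 \<le> a^(n-m')" using a1' by simp
        have "2*real (n choose m')*a^(n-m') + 2*q^m' * a^(n-m')
            \<le> 2*real (n choose m')*a^(n-m') + 2*real (n choose m')*q^m' * a^(n-m')"
          using C1 qm an0 by (intro add_left_mono mult_right_mono) auto
        also have "\<dots> = 2*real (n choose m')*a^(n-m') * (1+q^m')" by (simp add: algebra_simps)
        also have "\<dots> \<le> 2*real (n choose m')*a^(n-m') * a^m'"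
          using am2 an0 by (intro mult_left_mono) auto
        also have "\<dots> = 2*real (n choose m')*a^n" using an by (simp add: mult.assoc)
        also have "\<dots> = rhs_bound p m' n" unfolding rhs a_def by simp
        finally show "lhs_sum p m' n \<le> rhs_bound p m' n"
          using st E X unfolding X_def by linarith
      qed
    qed
  next
    show "p < 0.01 \<longrightarrow> (\<forall>n'::nat. n' \<ge> 2 * m' \<longrightarrow> lhs_sum p m' n' \<le> rhs_bound p m' n')"
    proof (intro impI allI)
      fix n assume p: "p < 0.01" and n: "2*m' \<le> n"
      have q25: "q \<le> 1/25" using p assms unfolding q_def by (simp add: field_simps)
      have "lhs_sum p m' n \<le> 2*real (n choose m')*(1+q^m')^(n-m') + (\<Sum>k\<in>{m'..n}. real (n choose k) * 0)"
        unfolding lhs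
      proof (rule main_bound)
        fix k show "gsum q m' k \<le> 2*hh q m' k + 0"
          using g_bound[of q k m'] small_q_hyp[of q k m'] q0 q25 by simp
      qed (use q0 n in auto)
      also have "\<dots> \<le> 2*real (n choose m')*(1+q^m')^n"
      proof -
        have "(1+q^m')^(n-m') \<le> (1+q^m')^n" using a1 by (intro power_increasing) auto
        then show ?thesis by (simp add: mult_left_mono)
      qed
      finally show "lhs_sum p m' n \<le> rhs_bound p m' n" unfolding rhs .
    qed
  qed
qed

end
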